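(* Let $E$ be a finite-dimensional real vector space, let $C$ be a nonzero nondegenerate cone of $E$, and let $u$ be an endomorphism of $E$ with $u(C)\subseteq C$. Put $v=\mathrm{id}_E+u$ and $C'=\bigcap_{n\geq 0}v^n(C)$. Then $C'$ is a nonzero nondegenerate cone contained in $C$, $u(C')\subseteq C'$, and $v(C')=C'$.
   Context: A cone of a finite-dimensional real vector space $E$ is a closed subset $C\subseteq E$ that contains $0$ and is stable under addition of vectors and under multiplication by positive scalars. A cone $C$ is nondegenerate if $C\cap(-C)=\{0\}$, and nonzero if it contains a nonzero vector. *)

theory Defs
  imports "HOL-Analysis.Analysis"
begin

definition closed_cone :: "'a::real_normed_vector set \<Rightarrow> bool" where
  "closed_cone C \<longleftrightarrow> closed C \<and> 0 \<in> C \<and> (\<forall>x\<in>C. \<forall>y\<in>C. x + y \<in> C)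
     \<and> (\<forall>t::real. t > 0 \<longrightarrow> (\<forall>x\<in>C. t *\<^sub>R x \<in> C))"

definition nondegenerate_cone :: "'a::real_vector set \<Rightarrow> bool" where
  "nondegenerate_cone C \<longleftrightarrow> C \<inter> uminus ` C = {0}"

definition nonzero_cone :: "'a::real_vector set \<Rightarrow> bool" where
  "nonzero_cone C \<longleftrightarrow> (\<exists>x\<in>C. x \<noteq> 0)"

end

theory Submission
  imports Defs
begin

lemma cone_bound:
  fixes C :: "'a::euclidean_space set" and L :: "'a \<Rightarrow> 'a"
  assumes cl: "closed C" and sc: "\<And>x t. x\<in>C \<Longrightarrow> t>0 \<Longrightarrow> t *\<^sub>R x \<in> C"
    and lin: "linear L" and ker: "\<And>x. x\<in>C \<Longrightarrow> L x = 0 \<Longrightarrow> x = 0"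
  shows "\<exists>m>0. \<forall>x\<in>C. m * norm x \<le> norm (L x)"
proof -
  let ?S = "C \<inter> sphere 0 1"
  have cS: "compact ?S" using cl by (simp add: closed_Int_compact)
  have inS: "(1 / norm x) *\<^sub>R x \<in> ?S" if "x \<in> C" "x \<noteq> 0" for x
    using sc[OF that(1), of "1/norm x"] that by auto
  show ?thesis
  proof (cases "?S = {}")
    case True
    then have "\<forall>x\<in>C. x = 0" using inS by blast
    then show ?thesis by (intro exI[of _ 1]) auto
  next
    case False
    have bl: "bounded_linear L" using lin by (simp add: linear_conv_bounded_linear)
    have "continuous_on ?S (\<lambda>x. norm (L x))"
      by (intro continuous_on_norm linear_continuous_on bl)
    then obtain z where z: "z \<in> ?S" "\<forall>y\<in>?S. norm (L z) \<le> norm (L y)"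
      using continuous_attains_inf[OF cS False] by blast
    have zpos: "norm (L z) > 0" using z(1) ker by fastforce
    show ?thesis
    proof (intro exI[of _ "norm (L z)"] conjI zpos ballI)
      fix x assume x: "x \<in> C"
      show "norm (L z) * norm x \<le> norm (L x)"
      proof (cases "x = 0")
        case True then show ?thesis by simp
      next
        case False
        have "norm (L z) \<le> norm (L ((1 / norm x) *\<^sub>R x))" using z(2) inS[OF x False] by blast
        also have "\<dots> = norm (L x) / norm x"
          using linear_scale[OF lin] by simp
        finally show ?thesis using False by (simp add: field_simps)
      qed
    qed
  qed
qed

lemma cone_closed_image:
  fixes C :: "'a::euclidean_space set" and L :: "'a \<Rightarrow> 'a"
  assumes cl: "closed C" and sc: "\<And>x t. x\<in>C \<Longrightarrow> t>0 \<Longrightarrow> t *\<^sub>R x \<in> C"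
    and lin: "linear L" and ker: "\<And>x. x\<in>C \<Longrightarrow> L x = 0 \<Longrightarrow> x = 0"
  shows "closed (L ` C)"
proof -
  obtain m where m: "m > 0" "\<forall>x\<in>C. m * norm x \<le> norm (L x)"
    using cone_bound[OF assms] by blast
  have bl: "bounded_linear L" using lin by (simp add: linear_conv_bounded_linear)
  have "closure (L ` C) \<subseteq> L ` C"
  proof
    fix y assume y: "y \<in> closure (L ` C)"
    let ?R = "(norm y + 1) / m"
    have "y \<in> ball y 1 \<inter> closure (L ` C)" using y by simp
    then have y2: "y \<in> closure (ball y 1 \<inter> L ` C)"
      using open_Int_closure_subset[of "ball y 1" "L ` C"] by blast
    have sub: "ball y 1 \<inter> L ` C \<subseteq> L ` (C \<inter> cball 0 ?R)"
    proof
      fix w assume "w \<in> ball y 1 \<inter> L ` C"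
      then obtain x where x: "x \<in> C" "w = L x" "dist y (L x) < 1" by auto
      have "norm (L x) \<le> norm y + dist y (L x)"
        by (metis dist_commute dist_norm norm_triangle_sub add.commute)
      then have "m * norm x \<le> norm y + 1" using m(2) x by fastforce
      then have "norm x \<le> ?R" using m(1) by (simp add: field_simps)
      then show "w \<in> L ` (C \<inter> cball 0 ?R)" using x by auto
    qed
    have "compact (L ` (C \<inter> cball 0 ?R))"
      by (intro compact_continuous_image linear_continuous_on bl closed_Int_compact cl compact_cball)
    then have "closed (L ` (C \<inter> cball 0 ?R))" by (rule compact_imp_closed)
    then have "y \<in> L ` (C \<inter> cball 0 ?R)" using y2 sub closure_minimal by blast
    then show "y \<in> L ` C" by blast
  qed
  then show ?thesis using closure_subset_eq by blast
qed

theorem mainTheorem11: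
  fixes C :: "'a::euclidean_space set" and u :: "'a \<Rightarrow> 'a"
  assumes "closed_cone C" and "nonzero_cone C" and "nondegenerate_cone C"
    and "linear u" and "u ` C \<subseteq> C"
  defines "v \<equiv> (\<lambda>x. x + u x)"
  defines "C' \<equiv> (\<Inter>n::nat. (v ^^ n) ` C)"
  shows "closed_cone C' \<and> nonzero_cone C' \<and> nondegenerate_cone C' \<and> C' \<subseteq> C
    \<and> u ` C' \<subseteq> C' \<and> v ` C' = C'"
proof -
  note cc = assms(1)[unfolded closed_cone_def]
  have clC: "closed C" and C0: "0 \<in> C" and addC: "\<And>x y. x\<in>C \<Longrightarrow> y\<in>C \<Longrightarrow> x+y \<in> C"
    and scC: "\<And>x t. x\<in>C \<Longrightarrow> t>0 \<Longrightarrow> t *\<^sub>R x \<in> C" using cc by auto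
  have nd: "C \<inter> uminus ` C = {0}" using assms(3) by (simp add: nondegenerate_cone_def)
  have linu: "linear u" by fact
  have linv: "linear v" unfolding v_def using linu
    by (intro linearI) (simp_all add: linear_add linear_scale algebra_simps)
  have linvn: "linear (v ^^ n)" for n
  proof (induction n)
    case 0 then show ?case by (simp add: linear_iff)
  next
    case (Suc n) then show ?case using linv linear_compose[of "v ^^ n" v] by (simp add: o_def)
  qed
  have uC: "x \<in> C \<Longrightarrow> u x \<in> C" for x using assms(5) by blast
  have vC: "x \<in> C \<Longrightarrow> v x \<in> C" for x unfolding v_def using addC uC by blast
  have vnC: "x \<in> C \<Longrightarrow> (v ^^ n) x \<in> C" for x n
    by (induction n) (auto intro: vC)
  have ker1: "w \<in> C \<Longrightarrow> v w = 0 \<Longrightarrow> w = 0" for w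
  proof -
    assume w: "w \<in> C" "v w = 0"
    then have "u w = - w" unfolding v_def by (simp add: eq_neg_iff_add_eq_0 add.commute)
    then have "w = - (u w)" by simp
    then have "w \<in> uminus ` C" using uC[OF w(1)] by blast
    then show "w = 0" using nd w(1) by blast
  qed
  have kern: "x \<in> C \<Longrightarrow> (v ^^ n) x = 0 \<Longrightarrow> x = 0" for x n
  proof (induction n)
    case 0 then show ?case by simp
  next
    case (Suc n)
    then have "(v ^^ n) x = 0" using ker1[OF vnC[OF Suc.prems(1)]] by simp
    then show ?case using Suc by blast
  qed
  have comm1: "u (v w) = v (u w)" for w unfolding v_def using linear_add[OF linu] by simp
  have comm: "u ((v ^^ n) x) = (v ^^ n) (u x)" for n x
    by (induction n) (simp_all add: comm1)
  define V where "V n = (v ^^ n) ` C" for n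
  have C'V: "C' = (\<Inter>n. V n)" unfolding C'_def V_def by simp
  have V0: "V 0 = C" unfolding V_def by simp
  have VSuc: "V (Suc n) \<subseteq> V n" for n
  proof
    fix y assume "y \<in> V (Suc n)"
    then obtain x where x: "x \<in> C" "y = (v ^^ Suc n) x" unfolding V_def by blast
    then have "y = (v ^^ n) (v x)" by (simp add: funpow_swap1)
    then show "y \<in> V n" using vC[OF x(1)] unfolding V_def by blast
  qed
  have Vmono: "m \<le> n \<Longrightarrow> V n \<subseteq> V m" for m n
    using lift_Suc_antimono_le[of V, OF VSuc] by blast
  have Vcl: "closed (V n)" for n unfolding V_def
    by (rule cone_closed_image[OF clC scC linvn kern]) auto
  have V0in: "0 \<in> V n" for n unfolding V_def using C0 linear_0[OF linvn] by force
  have Vadd: "x \<in> V n \<Longrightarrow> y \<in> V n \<Longrightarrow> x + y \<in> V n" for x y n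
  proof -
    assume "x \<in> V n" "y \<in> V n"
    then obtain a b where "a \<in> C" "b \<in> C" "x = (v^^n) a" "y = (v^^n) b" unfolding V_def by blast
    then show "x + y \<in> V n" unfolding V_def using addC linear_add[OF linvn, of n a b]
      by (metis image_eqI)
  qed
  have Vsc: "x \<in> V n \<Longrightarrow> t > 0 \<Longrightarrow> t *\<^sub>R x \<in> V n" for x n t
  proof -
    assume "x \<in> V n" "t > 0"
    then obtain a where "a \<in> C" "x = (v^^n) a" unfolding V_def by blast
    then show "t *\<^sub>R x \<in> V n" unfolding V_def using scC[OF _ \<open>t>0\<close>] linear_scale[OF linvn, of n t a]
      by (metis image_eqI)
  qed
  have sub: "C' \<subseteq> C" using C'V V0 by blast
  have closedC': "closed_cone C'" unfolding closed_cone_def C'V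
    using Vcl V0in Vadd Vsc by (auto intro!: closed_INT)
  have nondeg: "nondegenerate_cone C'" unfolding nondegenerate_cone_def
  proof
    show "C' \<inter> uminus ` C' \<subseteq> {0}" using sub nd by blast
    show "{0} \<subseteq> C' \<inter> uminus ` C'" using V0in C'V by force
  qed
  have nonz: "nonzero_cone C'"
  proof -
    obtain x0 where x0: "x0 \<in> C" "x0 \<noteq> 0" using assms(2) by (auto simp: nonzero_cone_def)
    define K where "K n = V n \<inter> sphere 0 1" for n
    have "K n \<noteq> {}" for n
    proof -
      have nz: "(v^^n) x0 \<noteq> 0" using kern x0 by blast
      have "(v^^n) x0 \<in> V n" using x0 unfolding V_def by blast
      then have "(1 / norm ((v^^n) x0)) *\<^sub>R (v^^n) x0 \<in> V n" using Vsc nz by simp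
      moreover have "(1 / norm ((v^^n) x0)) *\<^sub>R (v^^n) x0 \<in> sphere 0 1" using nz by simp
      ultimately show ?thesis unfolding K_def by blast
    qed
    moreover have "closed (K n)" for n unfolding K_def using Vcl by (simp add: closed_Int)
    moreover have "m \<le> n \<Longrightarrow> K n \<subseteq> K m" for m n unfolding K_def using Vmono by blast
    moreover have "bounded (K 0)" unfolding K_def by (meson bounded_Int bounded_sphere)
    ultimately obtain a where "\<And>n. a \<in> K n" using bounded_closed_nest[of K] by metis
    then have "a \<in> C'" "a \<noteq> 0" unfolding K_def C'V by auto
    then show ?thesis unfolding nonzero_cone_def by blast
  qed
  have uC': "u ` C' \<subseteq> C'"
  proof
    fix y assume "y \<in> u ` C'"
    then obtain x where x: "x \<in> C'" "y = u x" by blast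
    have "y \<in> V n" for n
    proof -
      obtain a where "a \<in> C" "x = (v^^n) a" using x(1) unfolding C'V V_def by blast
      then have "y = (v^^n) (u a)" using x(2) comm by simp
      then show ?thesis using uC \<open>a \<in> C\<close> unfolding V_def by blast
    qed
    then show "y \<in> C'" unfolding C'V by blast
  qed
  have vsub: "v ` C' \<subseteq> C'"
  proof
    fix y assume "y \<in> v ` C'"
    then obtain x where x: "x \<in> C'" "y = v x" by blast
    have "y \<in> V n" for n
    proof -
      obtain a where "a \<in> C" "x = (v^^n) a" using x(1) unfolding C'V V_def by blast
      then have "y = (v^^n) (v a)" using x(2) by (simp add: funpow_swap1)
      then show ?thesis using vC \<open>a \<in> C\<close> unfolding V_def by blast
    qed
    then show "y \<in> C'" unfolding C'V by blast
  qed
  have vsup: "C' \<subseteq> v ` C'"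
  proof
    fix y assume y: "y \<in> C'"
    obtain m where m: "m > 0" "\<forall>x\<in>C. m * norm x \<le> norm (v x)"
      using cone_bound[OF clC scC linv ker1] by blast
    define K where "K n = V n \<inter> {x. v x = y}" for n
    have "K n \<noteq> {}" for n
    proof -
      have "y \<in> V (Suc n)" using y C'V by blast
      then obtain a where a: "a \<in> C" "y = (v ^^ Suc n) a" unfolding V_def by blast
      then have "y = v ((v^^n) a)" by simp
      moreover have "(v^^n) a \<in> V n" using a unfolding V_def by blast
      ultimately show ?thesis unfolding K_def by blast
    qed
    moreover have "closed (K n)" for n
    proof -
      have "continuous_on UNIV v"
        using linv by (simp add: linear_conv_bounded_linear linear_continuous_on)
      then have "closed {x. v x = y}" using closed_Collect_eq[of v "\<lambda>_. y"] by simp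
      then show ?thesis unfolding K_def using Vcl by (simp add: closed_Int)
    qed
    moreover have "m' \<le> n \<Longrightarrow> K n \<subseteq> K m'" for m' n unfolding K_def using Vmono by blast
    moreover have "bounded (K 0)"
    proof -
      have "K 0 \<subseteq> cball 0 (norm y / m)"
      proof
        fix x assume "x \<in> K 0"
        then have "x \<in> C" "v x = y" unfolding K_def V0 by auto
        then have "m * norm x \<le> norm y" using m(2) by blast
        then show "x \<in> cball 0 (norm y / m)" using m(1) by (simp add: field_simps)
      qed
      then show ?thesis using bounded_cball bounded_subset by blast
    qed
    ultimately obtain a where "\<And>n. a \<in> K n" using bounded_closed_nest[of K] by metis
    then have "a \<in> C'" "v a = y" unfolding K_def C'V by auto
    then show "y \<in> v ` C'" by blast
  qed
  show ?thesis using closedC' nonz nondeg sub uC' vsub vsup by blast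
qed

end
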